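(* Let $V$ be a finite-dimensional real vector space with a seminorm $|\cdot|_V$, and let $\sigma$ be a zonal representation of $|\cdot|_V$. Then for every set $X$, every $\sigma$-algebra $\Sigma$ on $X$, every vector measure $\mu:\Sigma\to V$ and every $A\in\Sigma$, $$|\mu|_V(A)=\int_{V'}|\langle\eta,\mu\rangle|_{\mathbb{R}}(A)\,d\sigma(\eta).$$
   Context: $V'$ is the set of linear forms $\eta$ on $V$ with finite dual seminorm $|\eta|_{V'}=\sup\{\eta(v):|v|_V\le1\}$. A zonal representation of $|\cdot|_V$ is a locally finite nonnegative Borel measure $\sigma$ on $V'$ such that $\int_{V'}|\eta|_{V'}\,d\sigma(\eta)<\infty$ and $|v|_V=\int_{V'}|\eta(v)|\,d\sigma(\eta)$ for all $v\in V$. A vector measure is a countably additive map $\mu:\Sigma\to V$; total variation: $|\mu|_V(A)=\sup\{\sum_{i=1}^m|\mu(E_i)|_V : E_1,\dots,E_m\in\Sigma \text{ pairwise disjoint subsets of } A\}$. For $\eta\in V'$, $\langle\eta,\mu\rangle$ is the signed measure $E\mapsto\eta(\mu(E))$ and $|\langle\eta,\mu\rangle|_{\mathbb{R}}$ its total variation with respect to the absolute value. *)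

theory Defs
  imports "HOL-Analysis.Analysis"
begin

definition is_seminorm :: "('v::real_vector \<Rightarrow> real) \<Rightarrow> bool" where
  "is_seminorm p \<longleftrightarrow> (\<forall>x y. p (x + y) \<le> p x + p y) \<and> (\<forall>c x. p (c *\<^sub>R x) = \<bar>c\<bar> * p x)"

text \<open>Linear forms on V with finite dual seminorm (V').  On a finite-dimensional
  space every linear form is bounded, so linear forms are the bounded linear forms.\<close>
definition dual_space :: "('v::real_normed_vector \<Rightarrow> real) \<Rightarrow> ('v \<Rightarrow>\<^sub>L real) set" where
  "dual_space p = {\<eta>. bdd_above {blinfun_apply \<eta> v | v. p v \<le> 1}}"

definition dual_seminorm :: "('v::real_normed_vector \<Rightarrow> real) \<Rightarrow> ('v \<Rightarrow>\<^sub>L real) \<Rightarrow> real" where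
  "dual_seminorm p \<eta> = Sup {blinfun_apply \<eta> v | v. p v \<le> 1}"

definition zonal_representation ::
  "('v::euclidean_space \<Rightarrow> real) \<Rightarrow> ('v \<Rightarrow>\<^sub>L real) measure \<Rightarrow> bool" where
  "zonal_representation p \<sigma> \<longleftrightarrow>
     sets \<sigma> = sets (restrict_space borel (dual_space p)) \<and>
     (\<forall>\<eta>\<in>dual_space p. \<exists>U. open U \<and> \<eta> \<in> U \<and> emeasure \<sigma> (U \<inter> dual_space p) < \<infinity>) \<and>
     (\<integral>\<^sup>+ \<eta>. ennreal (dual_seminorm p \<eta>) \<partial>\<sigma>) < \<infinity> \<and>
     (\<forall>v. ennreal (p v) = (\<integral>\<^sup>+ \<eta>. ennreal \<bar>blinfun_apply \<eta> v\<bar> \<partial>\<sigma>))"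

definition vector_measure :: "'a measure \<Rightarrow> ('a set \<Rightarrow> 'v::{topological_space, comm_monoid_add}) \<Rightarrow> bool" where
  "vector_measure M \<mu> \<longleftrightarrow>
     (\<forall>F. range F \<subseteq> sets M \<longrightarrow> disjoint_family F \<longrightarrow> (\<lambda>n. \<mu> (F n)) sums \<mu> (\<Union>n. F n))"

definition total_variation ::
  "('v \<Rightarrow> real) \<Rightarrow> 'a measure \<Rightarrow> ('a set \<Rightarrow> 'v) \<Rightarrow> 'a set \<Rightarrow> ennreal" where
  "total_variation q M \<mu> A =
     (SUP EE \<in> {(m::nat, E). (\<forall>i<m. E i \<in> sets M \<and> E i \<subseteq> A) \<and> disjoint_family_on E {..<m}}.
        (\<Sum>i<fst EE. ennreal (q (\<mu> (snd EE i)))))"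

end

theory Submission
  imports Defs
begin


definition fadd :: "'a measure \<Rightarrow> ('a set \<Rightarrow> 'w::real_vector) \<Rightarrow> bool" where
  "fadd M \<nu> \<longleftrightarrow> \<nu> {} = 0 \<and> (\<forall>X\<in>sets M. \<forall>Y\<in>sets M. X \<inter> Y = {} \<longrightarrow> \<nu> (X \<union> Y) = \<nu> X + \<nu> Y)"

definition subadd :: "('w::real_vector \<Rightarrow> real) \<Rightarrow> bool" where
  "subadd q \<longleftrightarrow> q 0 = 0 \<and> (\<forall>x. 0 \<le> q x) \<and> (\<forall>x y. q (x + y) \<le> q x + q y)"

definition parts :: "'a measure \<Rightarrow> 'a set \<Rightarrow> 'a set set set" where
  "parts M A = {P. finite P \<and> P \<subseteq> sets M \<and> (\<forall>E\<in>P. E \<subseteq> A) \<and> disjoint P}"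

definition psum :: "('w \<Rightarrow> real) \<Rightarrow> ('a set \<Rightarrow> 'w) \<Rightarrow> 'a set set \<Rightarrow> real" where
  "psum q \<nu> P = (\<Sum>E\<in>P. q (\<nu> E))"

definition plusA :: "'a set \<Rightarrow> 'a set set \<Rightarrow> 'a set set" where
  "plusA A P = insert (A - \<Union>P) P"

definition refine :: "'a set \<Rightarrow> 'a set set \<Rightarrow> 'a set set \<Rightarrow> 'a set set" where
  "refine A P Q = (\<lambda>(E,F). E \<inter> F) ` (plusA A P \<times> plusA A Q)"

lemma fadd_finite:
  assumes "fadd M \<nu>" "finite I" "\<And>i. i \<in> I \<Longrightarrow> G i \<in> sets M" "disjoint_family_on G I"
  shows "\<nu> (\<Union>i\<in>I. G i) = (\<Sum>i\<in>I. \<nu> (G i))"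
  using assms(2,3,4)
proof (induction I rule: finite_induct)
  case empty then show ?case using assms(1) by (simp add: fadd_def)
next
  case (insert i I)
  have d: "G i \<inter> (\<Union>j\<in>I. G j) = {}"
    using insert.prems(2) insert.hyps(2) unfolding disjoint_family_on_def by auto
  have m: "(\<Union>j\<in>I. G j) \<in> sets M" using insert by auto
  have "\<nu> (\<Union>j\<in>insert i I. G j) = \<nu> (G i \<union> (\<Union>j\<in>I. G j))" by simp
  also have "\<dots> = \<nu> (G i) + \<nu> (\<Union>j\<in>I. G j)"
    using assms(1) d m insert.prems(1) unfolding fadd_def by auto
  also have "\<dots> = \<nu> (G i) + (\<Sum>j\<in>I. \<nu> (G j))"
    using insert.IH insert.prems by (auto simp: disjoint_family_on_def)
  finally show ?case using insert.hyps by simp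
qed

lemma subadd_sum:
  assumes "subadd q" "finite I"
  shows "q (\<Sum>i\<in>I. f i) \<le> (\<Sum>i\<in>I. q (f i))"
  using assms(2)
proof (induction I rule: finite_induct)
  case empty then show ?case using assms(1) by (simp add: subadd_def)
next
  case (insert i I)
  have "q (f i + (\<Sum>j\<in>I. f j)) \<le> q (f i) + q (\<Sum>j\<in>I. f j)"
    using assms(1) unfolding subadd_def by blast
  then show ?case using insert by simp
qed

lemma plusA_facts:
  assumes "P \<in> parts M A" "A \<in> sets M"
  shows "finite (plusA A P)" "plusA A P \<subseteq> sets M" "\<And>E. E \<in> plusA A P \<Longrightarrow> E \<subseteq> A"
    "disjoint (plusA A P)" "A \<subseteq> \<Union>(plusA A P)"
proof -
  have P: "finite P" "P \<subseteq> sets M" "\<And>E. E\<in>P \<Longrightarrow> E \<subseteq> A" "disjoint P"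
    using assms(1) by (auto simp: parts_def)
  show "finite (plusA A P)" using P by (simp add: plusA_def)
  show "plusA A P \<subseteq> sets M" using P assms(2) by (auto simp: plusA_def intro!: sets.Diff sets.finite_Union)
  show "\<And>E. E \<in> plusA A P \<Longrightarrow> E \<subseteq> A" using P by (auto simp: plusA_def)
  show "disjoint (plusA A P)" using P unfolding plusA_def
    by (auto simp: pairwise_insert disjnt_def)
  show "A \<subseteq> \<Union>(plusA A P)" by (auto simp: plusA_def)
qed

lemma refine_parts:
  assumes "P \<in> parts M A" "Q \<in> parts M A" "A \<in> sets M"
  shows "refine A P Q \<in> parts M A"
proof -
  note p = plusA_facts[OF assms(1,3)] and q = plusA_facts[OF assms(2,3)]
  have "disjoint (refine A P Q)"
    unfolding refine_def pairwise_def disjnt_def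
  proof (clarsimp)
    fix E F E' F' assume a: "E \<in> plusA A P" "F \<in> plusA A Q" "E' \<in> plusA A P" "F' \<in> plusA A Q"
      "E \<inter> F \<noteq> E' \<inter> F'"
    then have "E \<noteq> E' \<or> F \<noteq> F'" by auto
    then show "E \<inter> F \<inter> (E' \<inter> F') = {}"
      using p(4) q(4) a unfolding pairwise_def disjnt_def by blast
  qed
  then show ?thesis using p q
    by (auto simp: parts_def refine_def)
qed

lemma refine_comm: "refine A P Q = refine A Q P"
  unfolding refine_def by (auto simp: image_iff)

lemma psum_refine:
  assumes "P \<in> parts M A" "Q \<in> parts M A" "A \<in> sets M" "fadd M \<nu>" "subadd q"
  shows "psum q \<nu> P \<le> psum q \<nu> (refine A P Q)"
proof -
  note p = plusA_facts[OF assms(1,3)] and qq = plusA_facts[OF assms(2,3)]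
  have q0: "q (\<nu> {}) = 0" using assms(4,5) by (simp add: fadd_def subadd_def)
  have qpos: "\<And>x. 0 \<le> q x" using assms(5) by (simp add: subadd_def)
  have "psum q \<nu> (refine A P Q) = (\<Sum>(E,F)\<in>plusA A P \<times> plusA A Q. q (\<nu> (E \<inter> F)))"
    unfolding psum_def refine_def
  proof (subst sum.reindex_nontrivial)
    show "finite (plusA A P \<times> plusA A Q)" using p(1) qq(1) by simp
    fix x y assume a: "x \<in> plusA A P \<times> plusA A Q" "y \<in> plusA A P \<times> plusA A Q" "x \<noteq> y"
      "(case x of (E, F) \<Rightarrow> E \<inter> F) = (case y of (E, F) \<Rightarrow> E \<inter> F)"
    obtain E F E' F' where xy: "x = (E,F)" "y = (E',F')" by (cases x, cases y) auto
    have "E \<noteq> E' \<or> F \<noteq> F'" using a xy by auto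
    then have "E \<inter> F = {}"
    proof
      assume "E \<noteq> E'"
      then have "E \<inter> E' = {}" using p(4) a(1,2) xy unfolding pairwise_def disjnt_def by auto
      then show ?thesis using a(4) xy by auto
    next
      assume "F \<noteq> F'"
      then have "F \<inter> F' = {}" using qq(4) a(1,2) xy unfolding pairwise_def disjnt_def by auto
      then show ?thesis using a(4) xy by auto
    qed
    then show "q (\<nu> (case x of (E, F) \<Rightarrow> E \<inter> F)) = 0" using xy q0 by simp
  qed (rule sum.cong, auto)
  also have "\<dots> = (\<Sum>E\<in>plusA A P. \<Sum>F\<in>plusA A Q. q (\<nu> (E \<inter> F)))"
    by (rule sum.cartesian_product[symmetric])
  also have "\<dots> \<ge> (\<Sum>E\<in>plusA A P. q (\<nu> E))"
  proof (rule sum_mono)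
    fix E assume E: "E \<in> plusA A P"
    have "E = (\<Union>F\<in>plusA A Q. E \<inter> F)" using qq(5) p(3)[OF E] by blast
    moreover have "\<nu> (\<Union>F\<in>plusA A Q. E \<inter> F) = (\<Sum>F\<in>plusA A Q. \<nu> (E \<inter> F))"
    proof (rule fadd_finite[OF assms(4) qq(1)])
      show "\<And>F. F \<in> plusA A Q \<Longrightarrow> E \<inter> F \<in> sets M" using p(2) qq(2) E by blast
      show "disjoint_family_on (\<lambda>F. E \<inter> F) (plusA A Q)"
        using qq(4) unfolding disjoint_family_on_def pairwise_def disjnt_def by blast
    qed
    ultimately have "\<nu> E = (\<Sum>F\<in>plusA A Q. \<nu> (E \<inter> F))" by simp
    then show "q (\<nu> E) \<le> (\<Sum>F\<in>plusA A Q. q (\<nu> (E \<inter> F)))"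
      using subadd_sum[OF assms(5) qq(1)] by simp
  qed
  moreover have "(\<Sum>E\<in>P. q (\<nu> E)) \<le> (\<Sum>E\<in>plusA A P. q (\<nu> E))"
    using p(1) qpos by (intro sum_mono2) (auto simp: plusA_def)
  ultimately show ?thesis unfolding psum_def by linarith
qed

lemma tv_eq:
  fixes \<nu> :: "'a set \<Rightarrow> 'w::zero" and M :: "'a measure"
  assumes "\<nu> {} = 0" "q 0 = 0" "\<And>x. 0 \<le> q x"
  shows "total_variation q M \<nu> A = (SUP P\<in>parts M A. ennreal (psum q \<nu> P))"
proof (rule antisym)
  show "total_variation q M \<nu> A \<le> (SUP P\<in>parts M A. ennreal (psum q \<nu> P))"
    unfolding total_variation_def
  proof (rule SUP_least, clarsimp)
    fix m and E :: "nat \<Rightarrow> 'a set" assume a: "\<forall>i<m. E i \<in> sets M \<and> E i \<subseteq> A" "disjoint_family_on E {..<m}"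
    have dj: "disjoint (E ` {..<m})"
      unfolding pairwise_def disjnt_def
    proof (clarsimp)
      fix i j assume ij: "i < m" "j < m" "E i \<noteq> E j"
      then have "i \<noteq> j" by auto
      then show "E i \<inter> E j = {}" using a(2) ij(1,2) unfolding disjoint_family_on_def by blast
    qed
    have P: "E ` {..<m} \<in> parts M A"
      using a dj by (auto simp: parts_def)
    have "psum q \<nu> (E ` {..<m}) = (\<Sum>i<m. q (\<nu> (E i)))"
      unfolding psum_def
    proof (subst sum.reindex_nontrivial)
      fix i j assume "i \<in> {..<m}" "j \<in> {..<m}" "i \<noteq> j" "E i = E j"
      then have "E i = {}" using a(2) unfolding disjoint_family_on_def by auto
      then show "q (\<nu> (E i)) = 0" using assms by simp
    qed auto
    then have "(\<Sum>i<m. ennreal (q (\<nu> (E i)))) = ennreal (psum q \<nu> (E ` {..<m}))"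
      using assms(3) by (simp add: sum_ennreal)
    then show "(\<Sum>i<m. ennreal (q (\<nu> (E i)))) \<le> (SUP P\<in>parts M A. ennreal (psum q \<nu> P))"
      using P by (metis SUP_upper)
  qed
next
  show "(SUP P\<in>parts M A. ennreal (psum q \<nu> P)) \<le> total_variation q M \<nu> A"
    unfolding total_variation_def
  proof (rule SUP_least)
    fix P assume P: "P \<in> parts M A"
    then have fin: "finite P" by (simp add: parts_def)
    obtain h where h: "bij_betw h {..<card P} P"
      using ex_bij_betw_nat_finite[OF fin] by (auto simp: atLeast0LessThan)
    have mem: "(card P, h) \<in> {(m::nat, E). (\<forall>i<m. E i \<in> sets M \<and> E i \<subseteq> A) \<and> disjoint_family_on E {..<m}}"
    proof -
      have "\<forall>i<card P. h i \<in> P" using h by (auto simp: bij_betw_def)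
      moreover have "disjoint_family_on h {..<card P}"
        unfolding disjoint_family_on_def
      proof (intro ballI impI)
        fix i j assume "i \<in> {..<card P}" "j \<in> {..<card P}" "i \<noteq> j"
        then have "h i \<noteq> h j" "h i \<in> P" "h j \<in> P" using h by (auto simp: bij_betw_def inj_on_def)
        then show "h i \<inter> h j = {}" using P by (auto simp: parts_def pairwise_def disjnt_def)
      qed
      ultimately show ?thesis using P by (auto simp: parts_def)
    qed
    have "psum q \<nu> P = (\<Sum>i<card P. q (\<nu> (h i)))"
      unfolding psum_def using sum.reindex_bij_betw[OF h, of "\<lambda>E. q (\<nu> E)"] by simp
    then have e: "ennreal (psum q \<nu> P) = (\<Sum>i<fst (card P, h). ennreal (q (\<nu> (snd (card P, h) i))))"
      using assms(3) by simp
    show "ennreal (psum q \<nu> P) \<le> (SUP EE\<in>{(m::nat, E). (\<forall>i<m. E i \<in> sets M \<and> E i \<subseteq> A) \<and> disjoint_family_on E {..<m}}.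
        \<Sum>i<fst EE. ennreal (q (\<nu> (snd EE i))))"
      by (rule order_trans[OF _ SUP_upper[OF mem]]) (simp add: e)
  qed
qed



lemma vm_fadd:
  fixes \<mu> :: "'a set \<Rightarrow> 'v::real_normed_vector"
  assumes "vector_measure M \<mu>" shows "fadd M \<mu>"
proof -
  have e: "\<mu> {} = 0"
  proof -
    have "(\<lambda>n. \<mu> ((\<lambda>_::nat. {}) n)) sums \<mu> (\<Union>n. (\<lambda>_::nat. {}) n)"
      using assms unfolding vector_measure_def by (auto simp: disjoint_family_on_def)
    then have "(\<lambda>n. \<mu> {}) sums \<mu> {}" by simp
    then have "(\<lambda>n. \<mu> {}) \<longlonglongrightarrow> 0" using summable_LIMSEQ_zero sums_summable by blast
    then show ?thesis using LIMSEQ_const_iff by blast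
  qed
  have "\<mu> (X \<union> Y) = \<mu> X + \<mu> Y" if "X \<in> sets M" "Y \<in> sets M" "X \<inter> Y = {}" for X Y
  proof -
    define F where "F = (\<lambda>n::nat. if n = 0 then X else if n = 1 then Y else {})"
    have r: "range F \<subseteq> sets M" using that by (auto simp: F_def)
    have d: "disjoint_family F" using that by (auto simp: F_def disjoint_family_on_def)
    have u: "(\<Union>n. F n) = X \<union> Y"
    proof
      show "(\<Union>n. F n) \<subseteq> X \<union> Y" by (auto simp: F_def split: if_splits)
      have "X = F 0" "Y = F 1" by (auto simp: F_def)
      then show "X \<union> Y \<subseteq> (\<Union>n. F n)" by blast
    qed
    have s1: "(\<lambda>n. \<mu> (F n)) sums \<mu> (X \<union> Y)" using assms r d u unfolding vector_measure_def by metis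
    have s2: "(\<lambda>n. \<mu> (F n)) sums (\<Sum>n\<in>{0,1}. \<mu> (F n))" by (rule sums_finite) (auto simp: F_def e)
    show ?thesis using sums_unique2[OF s1 s2] by (simp add: F_def)
  qed
  then show ?thesis using e by (simp add: fadd_def)
qed

lemma fadd_blinfun: "fadd M \<mu> \<Longrightarrow> fadd M (\<lambda>E. blinfun_apply \<eta> (\<mu> E))"
  by (simp add: fadd_def blinfun.add_right blinfun.zero_right)

lemma subadd_abs: "subadd (abs :: real \<Rightarrow> real)"
  by (simp add: subadd_def abs_triangle_ineq)

lemma semi_facts:
  assumes "is_seminorm p"
  shows "p 0 = 0" "p (- x) = p x" "0 \<le> p x" "subadd p"
proof -
  have s: "\<And>c x. p (c *\<^sub>R x) = \<bar>c\<bar> * p x" "\<And>x y. p (x + y) \<le> p x + p y"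
    using assms by (auto simp: is_seminorm_def)
  show z: "p 0 = 0" using s(1)[of 0 0] by simp
  show m: "\<And>x. p (- x) = p x" using s(1)[of "-1"] by simp
  show n: "\<And>x. 0 \<le> p x"
  proof -
    fix x have "p (x + - x) \<le> p x + p (- x)" by (rule s(2))
    then show "0 \<le> p x" using z m[of x] by simp
  qed
  show "subadd p" using z n s(2) by (simp add: subadd_def)
qed

lemma dual_nonneg:
  assumes "is_seminorm p" "\<eta> \<in> dual_space p"
  shows "0 \<le> dual_seminorm p \<eta>"
proof -
  have "p 0 \<le> 1" using semi_facts(1)[OF assms(1)] by simp
  then have "blinfun_apply \<eta> 0 \<in> {blinfun_apply \<eta> v | v. p v \<le> 1}" by blast
  moreover have "bdd_above {blinfun_apply \<eta> v | v. p v \<le> 1}"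
    using assms(2) by (simp add: dual_space_def)
  ultimately have "blinfun_apply \<eta> 0 \<le> dual_seminorm p \<eta>"
    unfolding dual_seminorm_def by (rule cSup_upper)
  then show ?thesis by (simp add: blinfun.zero_right)
qed

lemma dual_bound:
  assumes "is_seminorm p" "\<eta> \<in> dual_space p"
  shows "\<bar>blinfun_apply \<eta> v\<bar> \<le> dual_seminorm p \<eta> * p v"
proof -
  let ?S = "{blinfun_apply \<eta> v | v. p v \<le> 1}"
  have bdd: "bdd_above ?S" using assms(2) by (simp add: dual_space_def)
  have up: "\<And>w. p w \<le> 1 \<Longrightarrow> blinfun_apply \<eta> w \<le> dual_seminorm p \<eta>"
    unfolding dual_seminorm_def using bdd by (auto intro!: cSup_upper)
  have sc: "\<And>c x. p (c *\<^sub>R x) = \<bar>c\<bar> * p x" using assms(1) by (auto simp: is_seminorm_def)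
  note sf = semi_facts[OF assms(1)]
  show ?thesis
  proof (cases "p v > 0")
    case True
    have a: "blinfun_apply \<eta> ((1 / p v) *\<^sub>R v) \<le> dual_seminorm p \<eta>"
      by (rule up) (use True sc in simp)
    have b: "blinfun_apply \<eta> ((1 / p v) *\<^sub>R (- v)) \<le> dual_seminorm p \<eta>"
      by (rule up) (use True sc sf(2) in simp)
    have "blinfun_apply \<eta> v \<le> dual_seminorm p \<eta> * p v"
      using a True by (simp add: blinfun.scaleR_right field_simps)
    moreover have "- blinfun_apply \<eta> v \<le> dual_seminorm p \<eta> * p v"
      using b True by (simp add: blinfun.scaleR_right blinfun.minus_right field_simps)
    ultimately show ?thesis by linarith
  next
    case False
    then have pv: "p v = 0" using sf(3)[of v] by linarith
    have "blinfun_apply \<eta> v = 0"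
    proof (rule ccontr)
      assume ne: "blinfun_apply \<eta> v \<noteq> 0"
      define t where "t = (dual_seminorm p \<eta> + 1) / blinfun_apply \<eta> v"
      have "blinfun_apply \<eta> (t *\<^sub>R v) \<le> dual_seminorm p \<eta>"
        by (rule up) (simp add: sc pv)
      then show False using ne by (simp add: t_def blinfun.scaleR_right)
    qed
    then show ?thesis using pv by simp
  qed
qed

lemma blinfun_finite_span:
  "(\<eta>::'v::euclidean_space \<Rightarrow>\<^sub>L real) \<in> span (blinfun_inner_left ` Basis)"
proof -
  have "\<eta> = (\<Sum>i\<in>Basis. blinfun_apply \<eta> i *\<^sub>R blinfun_inner_left i)"
  proof (rule blinfun_eqI)
    fix v :: 'v
    have "blinfun_apply \<eta> v = blinfun_apply \<eta> (\<Sum>i\<in>Basis. (v \<bullet> i) *\<^sub>R i)"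
      by (simp add: euclidean_representation)
    also have "\<dots> = (\<Sum>i\<in>Basis. (v \<bullet> i) * blinfun_apply \<eta> i)"
      by (simp add: blinfun.sum_right blinfun.scaleR_right)
    finally show "blinfun_apply \<eta> v = blinfun_apply (\<Sum>i\<in>Basis. blinfun_apply \<eta> i *\<^sub>R blinfun_inner_left i) v"
      by (simp add: blinfun.sum_left blinfun.scaleR_left blinfun_inner_left.rep_eq mult.commute)
  qed
  also have "\<dots> \<in> span (blinfun_inner_left ` Basis)"
    by (intro span_sum span_mul span_base) auto
  finally show ?thesis .
qed



theorem lemma4p2:
  fixes p :: "'v::euclidean_space \<Rightarrow> real"
    and \<sigma> :: "('v \<Rightarrow>\<^sub>L real) measure"
    and M :: "'a measure"
    and \<mu> :: "'a set \<Rightarrow> 'v"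
  assumes "is_seminorm p"
    and "zonal_representation p \<sigma>"
    and "vector_measure M \<mu>"
    and "A \<in> sets M"
  shows "total_variation p M \<mu> A =
    (\<integral>\<^sup>+ \<eta>. total_variation abs M (\<lambda>E. blinfun_apply \<eta> (\<mu> E)) A \<partial>\<sigma>)"
proof -
  note sf = semi_facts[OF assms(1)]
  have f\<mu>: "fadd M \<mu>" by (rule vm_fadd[OF assms(3)])
  define \<nu> where "\<nu> \<eta> = (\<lambda>E. blinfun_apply \<eta> (\<mu> E))" for \<eta> :: "'v \<Rightarrow>\<^sub>L real"
  define T where "T \<eta> = total_variation abs M (\<nu> \<eta>) A" for \<eta>
  define L where "L = total_variation p M \<mu> A"
  define D where "D = dual_space p"
  have zs: "sets \<sigma> = sets (restrict_space borel D)"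
    and zp: "\<And>v. ennreal (p v) = (\<integral>\<^sup>+ \<eta>. ennreal \<bar>blinfun_apply \<eta> v\<bar> \<partial>\<sigma>)"
    using assms(2) by (auto simp: zonal_representation_def D_def)
  have sp: "space \<sigma> = D"
    using sets_eq_imp_space_eq[OF zs] by (simp add: space_restrict_space)
  have meas: "(\<lambda>\<eta>. ennreal \<bar>blinfun_apply \<eta> v\<bar>) \<in> borel_measurable \<sigma>" for v
  proof -
    have "(\<lambda>\<eta>::'v \<Rightarrow>\<^sub>L real. blinfun_apply \<eta> v) \<in> borel_measurable borel"
      by (intro borel_measurable_continuous_onI continuous_intros)
    then have "(\<lambda>\<eta>::'v \<Rightarrow>\<^sub>L real. ennreal \<bar>blinfun_apply \<eta> v\<bar>) \<in> borel_measurable borel"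
      by measurable
    then have "(\<lambda>\<eta>::'v \<Rightarrow>\<^sub>L real. ennreal \<bar>blinfun_apply \<eta> v\<bar>) \<in> borel_measurable (restrict_space borel D)"
      by (rule measurable_restrict_space1)
    then show ?thesis unfolding measurable_cong_sets[OF zs refl] .
  qed
  have f\<nu>: "\<And>\<eta>. fadd M (\<nu> \<eta>)" unfolding \<nu>_def by (rule fadd_blinfun[OF f\<mu>])
  have Teq: "\<And>\<eta>. T \<eta> = (SUP P\<in>parts M A. ennreal (psum abs (\<nu> \<eta>) P))"
    unfolding T_def by (rule tv_eq) (use f\<nu> in \<open>auto simp: fadd_def\<close>)
  have Leq: "L = (SUP P\<in>parts M A. ennreal (psum p \<mu> P))"
    unfolding L_def by (rule tv_eq) (use f\<mu> sf in \<open>auto simp: fadd_def\<close>)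
  have psnn: "\<And>\<eta> P. 0 \<le> psum abs (\<nu> \<eta>) P" by (simp add: psum_def sum_nonneg)
  have int_eq: "(\<integral>\<^sup>+\<eta>. ennreal (psum abs (\<nu> \<eta>) P) \<partial>\<sigma>) = ennreal (psum p \<mu> P)"
    if P: "P \<in> parts M A" for P
  proof -
    have "(\<integral>\<^sup>+\<eta>. ennreal (psum abs (\<nu> \<eta>) P) \<partial>\<sigma>)
        = (\<integral>\<^sup>+\<eta>. (\<Sum>E\<in>P. ennreal \<bar>blinfun_apply \<eta> (\<mu> E)\<bar>) \<partial>\<sigma>)"
      by (simp add: psum_def \<nu>_def sum_ennreal)
    also have "\<dots> = (\<Sum>E\<in>P. \<integral>\<^sup>+\<eta>. ennreal \<bar>blinfun_apply \<eta> (\<mu> E)\<bar> \<partial>\<sigma>)"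
      by (rule nn_integral_sum) (rule meas)
    also have "\<dots> = (\<Sum>E\<in>P. ennreal (p (\<mu> E)))" by (simp add: zp)
    also have "\<dots> = ennreal (psum p \<mu> P)" by (simp add: psum_def sum_ennreal sf(3))
    finally show ?thesis .
  qed
  have psT: "\<And>\<eta> P. P \<in> parts M A \<Longrightarrow> ennreal (psum abs (\<nu> \<eta>) P) \<le> T \<eta>"
    unfolding Teq by (rule SUP_upper)
  have psL: "\<And>P. P \<in> parts M A \<Longrightarrow> ennreal (psum p \<mu> P) \<le> L"
    unfolding Leq by (rule SUP_upper)
  have le1: "L \<le> (\<integral>\<^sup>+ \<eta>. T \<eta> \<partial>\<sigma>)"
    unfolding Leq
  proof (rule SUP_least)
    fix P assume P: "P \<in> parts M A"
    have "ennreal (psum p \<mu> P) = (\<integral>\<^sup>+\<eta>. ennreal (psum abs (\<nu> \<eta>) P) \<partial>\<sigma>)"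
      using int_eq[OF P] by simp
    also have "\<dots> \<le> (\<integral>\<^sup>+ \<eta>. T \<eta> \<partial>\<sigma>)"
      by (rule nn_integral_mono) (rule psT[OF P])
    finally show "ennreal (psum p \<mu> P) \<le> (\<integral>\<^sup>+ \<eta>. T \<eta> \<partial>\<sigma>)" .
  qed
  have le2: "(\<integral>\<^sup>+ \<eta>. T \<eta> \<partial>\<sigma>) \<le> L"
  proof (cases "L = top")
    case True then show ?thesis by simp
  next
    case False
    then have Lfin: "L < top" by (simp add: top.not_eq_extremum)
    have Tadd: "T (\<eta> + \<zeta>) \<le> T \<eta> + T \<zeta>" for \<eta> \<zeta>
      unfolding Teq[of "\<eta> + \<zeta>"]
    proof (rule SUP_least)
      fix P assume P: "P \<in> parts M A"
      have "psum abs (\<nu> (\<eta> + \<zeta>)) P \<le> psum abs (\<nu> \<eta>) P + psum abs (\<nu> \<zeta>) P"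
        unfolding psum_def \<nu>_def sum.distrib[symmetric]
        by (rule sum_mono) (simp add: blinfun.add_left abs_triangle_ineq)
      then have "ennreal (psum abs (\<nu> (\<eta> + \<zeta>)) P) \<le> ennreal (psum abs (\<nu> \<eta>) P) + ennreal (psum abs (\<nu> \<zeta>) P)"
        using psnn by (simp add: ennreal_plus[symmetric] del: ennreal_plus)
      also have "\<dots> \<le> T \<eta> + T \<zeta>" by (intro add_mono psT P)
      finally show "ennreal (psum abs (\<nu> (\<eta> + \<zeta>)) P) \<le> T \<eta> + T \<zeta>" .
    qed
    have Tscale: "T (c *\<^sub>R \<eta>) \<le> ennreal \<bar>c\<bar> * T \<eta>" for c \<eta>
      unfolding Teq[of "c *\<^sub>R \<eta>"]
    proof (rule SUP_least)
      fix P assume P: "P \<in> parts M A"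
      have "psum abs (\<nu> (c *\<^sub>R \<eta>)) P = \<bar>c\<bar> * psum abs (\<nu> \<eta>) P"
        unfolding psum_def \<nu>_def by (simp add: blinfun.scaleR_left abs_mult sum_distrib_left)
      then have "ennreal (psum abs (\<nu> (c *\<^sub>R \<eta>)) P) = ennreal \<bar>c\<bar> * ennreal (psum abs (\<nu> \<eta>) P)"
        by (simp add: ennreal_mult psnn)
      also have "\<dots> \<le> ennreal \<bar>c\<bar> * T \<eta>" by (intro mult_left_mono psT P) simp
      finally show "ennreal (psum abs (\<nu> (c *\<^sub>R \<eta>)) P) \<le> ennreal \<bar>c\<bar> * T \<eta>" .
    qed
    have T0: "T 0 = 0"
      using Tscale[of 0 0] by simp
    have Tsum: "T (\<Sum>b\<in>B. a b *\<^sub>R b) \<le> (\<Sum>b\<in>B. ennreal \<bar>a b\<bar> * T b)" if "finite B" for B a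
      using that
    proof (induction B rule: finite_induct)
      case empty then show ?case by (simp add: T0)
    next
      case (insert x B)
      have "T (\<Sum>b\<in>insert x B. a b *\<^sub>R b) = T (a x *\<^sub>R x + (\<Sum>b\<in>B. a b *\<^sub>R b))"
        using insert.hyps by simp
      also have "\<dots> \<le> T (a x *\<^sub>R x) + T (\<Sum>b\<in>B. a b *\<^sub>R b)" by (rule Tadd)
      also have "\<dots> \<le> ennreal \<bar>a x\<bar> * T x + (\<Sum>b\<in>B. ennreal \<bar>a b\<bar> * T b)"
        by (intro add_mono Tscale insert.IH)
      finally show ?case using insert.hyps by simp
    qed
    have TD: "T \<eta> \<le> ennreal (dual_seminorm p \<eta>) * L" if \<eta>: "\<eta> \<in> D" for \<eta>
      unfolding Teq[of \<eta>]
    proof (rule SUP_least)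
      fix P assume P: "P \<in> parts M A"
      have dn: "0 \<le> dual_seminorm p \<eta>" using dual_nonneg[OF assms(1)] \<eta> by (simp add: D_def)
      have "psum abs (\<nu> \<eta>) P \<le> dual_seminorm p \<eta> * psum p \<mu> P"
        unfolding psum_def \<nu>_def sum_distrib_left
        by (rule sum_mono) (use dual_bound[OF assms(1)] \<eta> in \<open>simp add: D_def\<close>)
      then have "ennreal (psum abs (\<nu> \<eta>) P) \<le> ennreal (dual_seminorm p \<eta>) * ennreal (psum p \<mu> P)"
        using dn by (simp add: ennreal_mult[symmetric] psum_def sum_nonneg sf(3) del: ennreal_mult)
      also have "\<dots> \<le> ennreal (dual_seminorm p \<eta>) * L" by (intro mult_left_mono psL P) simp
      finally show "ennreal (psum abs (\<nu> \<eta>) P) \<le> ennreal (dual_seminorm p \<eta>) * L" .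
    qed
    obtain B where B: "B \<subseteq> D" "independent B" "D \<subseteq> span B"
      by (rule maximal_independent_subset)
    have finB: "finite B"
    proof -
      have sb: "B \<subseteq> span (blinfun_inner_left ` (Basis :: 'v set))"
        using blinfun_finite_span by blast
      show ?thesis using independent_span_bound[OF finite_imageI[OF finite_Basis] B(2) sb] by simp
    qed
    have TB: "T b < top" if "b \<in> B" for b
    proof -
      have "T b \<le> ennreal (dual_seminorm p b) * L" by (rule TD[OF subsetD[OF B(1) that]])
      also have "\<dots> < top" using Lfin by (simp add: ennreal_mult_less_top)
      finally show ?thesis .
    qed
    have Kfin: "(\<Sum>b\<in>B. T b) < top" using TB finB by (simp add: ennreal_sum_less_top)
    define K where "K = (\<Sum>b\<in>B. T b)"
    define D' where "D' = (\<lambda>r. \<Sum>b\<in>B. r b *\<^sub>R b) ` (PiE B (\<lambda>_. \<rat>))"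
    have cD': "countable D'" unfolding D'_def
      by (intro countable_image countable_PiE finB countable_rat)
    have pne: "{} \<in> parts M A" by (simp add: parts_def)
    have Sx: "\<exists>S::nat \<Rightarrow> 'a set set. range S \<subseteq> parts M A \<and> T \<eta> = (SUP n. ennreal (psum abs (\<nu> \<eta>) (S n)))" for \<eta>
    proof -
      have ne: "parts M A \<noteq> {}" using pne by blast
      obtain f :: "nat \<Rightarrow> ennreal" where f: "range f \<subseteq> (\<lambda>P. ennreal (psum abs (\<nu> \<eta>) P)) ` parts M A"
          "(SUP P\<in>parts M A. ennreal (psum abs (\<nu> \<eta>) P)) = Sup (range f)"
        using ennreal_SUP_countable_SUP[OF ne] by blast
      have "\<forall>n. \<exists>P\<in>parts M A. f n = ennreal (psum abs (\<nu> \<eta>) P)" using f(1) by blast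
      then obtain S where S: "\<And>n. S n \<in> parts M A" "\<And>n. f n = ennreal (psum abs (\<nu> \<eta>) (S n))"
        by metis
      have "f = (\<lambda>n. ennreal (psum abs (\<nu> \<eta>) (S n)))" by (rule ext) (rule S(2))
      then have "T \<eta> = (SUP n. ennreal (psum abs (\<nu> \<eta>) (S n)))" using f(2) Teq by simp
      moreover have "range S \<subseteq> parts M A" using S(1) by auto
      ultimately have ex: "range S \<subseteq> parts M A \<and> T \<eta> = (SUP n. ennreal (psum abs (\<nu> \<eta>) (S n)))" by simp
      show ?thesis by (rule exI[of _ S]) (rule ex)
    qed
    then have "\<forall>\<eta>::'v \<Rightarrow>\<^sub>L real. \<exists>S::nat \<Rightarrow> 'a set set. range S \<subseteq> parts M A \<and> T \<eta> = (SUP n. ennreal (psum abs (\<nu> \<eta>) (S n)))" by blast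
    then obtain S :: "('v \<Rightarrow>\<^sub>L real) \<Rightarrow> nat \<Rightarrow> 'a set set" where S0: "\<forall>\<eta>. range (S \<eta>) \<subseteq> parts M A \<and> T \<eta> = (SUP n. ennreal (psum abs (\<nu> \<eta>) (S \<eta> n)))"
      by (rule choice_iff[THEN iffD1, elim_format]) blast
    have S: "\<And>\<eta>. range (S \<eta>) \<subseteq> parts M A"
      "\<And>\<eta>. T \<eta> = (SUP n. ennreal (psum abs (\<nu> \<eta>) (S \<eta> n)))" using S0 by auto
    define Q where "Q = insert {} (\<Union>\<eta>\<in>D'. range (S \<eta>))"
    have Qne: "Q \<noteq> {}" by (simp add: Q_def)
    have cQ: "countable Q" unfolding Q_def using cD' by auto
    have Qp: "Q \<subseteq> parts M A" using S(1) pne by (auto simp: Q_def)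
    define R where "R = from_nat_into Q"
    have rR: "range R = Q" unfolding R_def by (rule range_from_nat_into[OF Qne cQ])
    have Rp: "R n \<in> parts M A" for n using rR Qp by blast
    define Pn where "Pn = rec_nat (R 0) (\<lambda>n X. refine A X (R (Suc n)))"
    have Pn0: "Pn 0 = R 0" by (simp add: Pn_def)
    have PnS: "Pn (Suc n) = refine A (Pn n) (R (Suc n))" for n by (simp add: Pn_def)
    have Pnp: "Pn n \<in> parts M A" for n
      by (induction n) (simp_all add: Pn0 PnS Rp refine_parts assms(4))
    have RPn: "psum abs (\<nu> \<eta>) (R n) \<le> psum abs (\<nu> \<eta>) (Pn n)" for \<eta> n
    proof (cases n)
      case 0 then show ?thesis by (simp add: Pn0)
    next
      case (Suc m)
      show ?thesis unfolding Suc PnS refine_comm[of A "Pn m"]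
        by (rule psum_refine[OF Rp Pnp assms(4) f\<nu> subadd_abs])
    qed
    have Pmono: "psum abs (\<nu> \<eta>) (Pn n) \<le> psum abs (\<nu> \<eta>) (Pn (Suc n))" for \<eta> n
      unfolding PnS by (rule psum_refine[OF Pnp Rp assms(4) f\<nu> subadd_abs])
    define g where "g \<eta> = (SUP n. ennreal (psum abs (\<nu> \<eta>) (Pn n)))" for \<eta>
    have gT: "g \<eta> \<le> T \<eta>" for \<eta> unfolding g_def by (rule SUP_least) (rule psT[OF Pnp])
    have gup: "ennreal (psum abs (\<nu> \<eta>) (Pn n)) \<le> g \<eta>" for \<eta> n
      unfolding g_def by (rule SUP_upper) simp
    have Tg: "T \<eta> \<le> g \<eta>" if "\<eta> \<in> D'" for \<eta>
      unfolding S(2)[of \<eta>]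
    proof (rule SUP_least)
      fix k :: nat
      have "S \<eta> k \<in> Q" using that by (auto simp: Q_def)
      then obtain n where n: "R n = S \<eta> k" using rR by (metis rangeE)
      then have "ennreal (psum abs (\<nu> \<eta>) (S \<eta> k)) \<le> ennreal (psum abs (\<nu> \<eta>) (Pn n))"
        using RPn[of \<eta> n] by (simp add: ennreal_leI)
      also have "\<dots> \<le> g \<eta>" by (rule gup)
      finally show "ennreal (psum abs (\<nu> \<eta>) (S \<eta> k)) \<le> g \<eta>" .
    qed
    have tri: "\<bar>blinfun_apply \<eta> x\<bar> \<le> \<bar>blinfun_apply \<zeta> x\<bar> + \<bar>blinfun_apply (\<eta> - \<zeta>) x\<bar>" for \<eta> \<zeta> :: "'v \<Rightarrow>\<^sub>L real" and x
    proof -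
      have "blinfun_apply (\<eta> - \<zeta>) x = blinfun_apply \<eta> x - blinfun_apply \<zeta> x" by (rule blinfun.diff_left)
      then show ?thesis by arith
    qed
    have gsub: "g \<eta> \<le> g \<zeta> + g (\<eta> - \<zeta>)" for \<eta> \<zeta>
      unfolding g_def[of \<eta>]
    proof (rule SUP_least)
      fix n :: nat
      have "psum abs (\<nu> \<eta>) (Pn n) \<le> psum abs (\<nu> \<zeta>) (Pn n) + psum abs (\<nu> (\<eta> - \<zeta>)) (Pn n)"
        unfolding psum_def \<nu>_def sum.distrib[symmetric]
        by (rule sum_mono) (rule tri)
      then have "ennreal (psum abs (\<nu> \<eta>) (Pn n)) \<le> ennreal (psum abs (\<nu> \<zeta>) (Pn n)) + ennreal (psum abs (\<nu> (\<eta> - \<zeta>)) (Pn n))"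
        using psnn by (simp add: ennreal_plus[symmetric] del: ennreal_plus)
      also have "\<dots> \<le> g \<zeta> + g (\<eta> - \<zeta>)" by (intro add_mono gup)
      finally show "ennreal (psum abs (\<nu> \<eta>) (Pn n)) \<le> g \<zeta> + g (\<eta> - \<zeta>)" .
    qed
    have main: "T \<eta> \<le> g \<eta>" if \<eta>: "\<eta> \<in> D" for \<eta>
    proof -
      have "\<eta> \<in> span B" using \<eta> B(3) by blast
      then obtain c where c: "\<eta> = (\<Sum>b\<in>B. c b *\<^sub>R b)" using span_finite[OF finB] by auto
      define k where "k = enn2real K"
      have Kk: "K = ennreal k" using Kfin by (simp add: k_def K_def ennreal_enn2real)
      have k0: "0 \<le> k" by (simp add: k_def)
      show ?thesis
      proof (rule ennreal_le_epsilon)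
        fix e :: real assume e: "0 < e"
        define \<epsilon> where "\<epsilon> = e / (2 * k + 1)"
        have \<epsilon>0: "0 < \<epsilon>" using e k0 by (simp add: \<epsilon>_def)
        have \<epsilon>e: "\<epsilon> * (2 * k + 1) = e" using k0 by (simp add: \<epsilon>_def)
        have "\<forall>b\<in>B. \<exists>r\<in>\<rat>. \<bar>c b - r\<bar> < \<epsilon>"
        proof
          fix b assume "b \<in> B"
          obtain r where "r \<in> \<rat>" "c b - \<epsilon> < r" "r < c b + \<epsilon>"
            using Rats_dense_in_real[of "c b - \<epsilon>" "c b + \<epsilon>"] \<epsilon>0 by auto
          then show "\<exists>r\<in>\<rat>. \<bar>c b - r\<bar> < \<epsilon>" by (intro bexI[of _ r]) auto
        qed
        then obtain r where r: "\<And>b. b \<in> B \<Longrightarrow> r b \<in> \<rat> \<and> \<bar>c b - r b\<bar> < \<epsilon>" by metis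
        define \<eta>' where "\<eta>' = (\<Sum>b\<in>B. r b *\<^sub>R b)"
        have \<eta>'D: "\<eta>' \<in> D'"
        proof -
          have "restrict r B \<in> PiE B (\<lambda>_. \<rat>)" using r by auto
          moreover have "\<eta>' = (\<Sum>b\<in>B. restrict r B b *\<^sub>R b)" unfolding \<eta>'_def by (rule sum.cong) auto
          ultimately show ?thesis unfolding D'_def by blast
        qed
        have d1: "\<eta> - \<eta>' = (\<Sum>b\<in>B. (c b - r b) *\<^sub>R b)"
          by (simp add: c \<eta>'_def scaleR_diff_left sum_subtractf)
        have d2: "\<eta>' - \<eta> = (\<Sum>b\<in>B. (r b - c b) *\<^sub>R b)"
          by (simp add: c \<eta>'_def scaleR_diff_left sum_subtractf)
        have bnd: "(\<Sum>b\<in>B. ennreal \<bar>a b\<bar> * T b) \<le> ennreal \<epsilon> * K" if "\<And>b. b\<in>B \<Longrightarrow> \<bar>a b\<bar> \<le> \<epsilon>" for a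
        proof -
          have "(\<Sum>b\<in>B. ennreal \<bar>a b\<bar> * T b) \<le> (\<Sum>b\<in>B. ennreal \<epsilon> * T b)"
            by (intro sum_mono mult_right_mono ennreal_leI that) auto
          also have "\<dots> = ennreal \<epsilon> * K" by (simp add: K_def sum_distrib_left)
          finally show ?thesis .
        qed
        have t1: "T (\<eta> - \<eta>') \<le> ennreal \<epsilon> * K"
          unfolding d1 using r by (intro order_trans[OF Tsum[OF finB] bnd]) (simp add: less_imp_le)
        have t2: "T (\<eta>' - \<eta>) \<le> ennreal \<epsilon> * K"
          unfolding d2 using r by (intro order_trans[OF Tsum[OF finB] bnd]) (simp add: less_imp_le abs_minus_commute)
        have ek: "ennreal \<epsilon> * K = ennreal (\<epsilon> * k)"
          using \<epsilon>0 k0 by (simp add: Kk ennreal_mult)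
        have "T \<eta> \<le> T \<eta>' + T (\<eta> - \<eta>')" using Tadd[of \<eta>' "\<eta> - \<eta>'"] by simp
        also have "\<dots> \<le> g \<eta>' + T (\<eta> - \<eta>')" using Tg[OF \<eta>'D] by (intro add_mono) auto
        also have "\<dots> \<le> (g \<eta> + g (\<eta>' - \<eta>)) + T (\<eta> - \<eta>')" using gsub[of \<eta>' \<eta>] by (intro add_mono) auto
        also have "\<dots> \<le> (g \<eta> + T (\<eta>' - \<eta>)) + T (\<eta> - \<eta>')" using gT by (intro add_mono) auto
        also have "\<dots> \<le> (g \<eta> + ennreal (\<epsilon> * k)) + ennreal (\<epsilon> * k)"
          using t1 t2 ek by (intro add_mono) auto
        also have "\<dots> = g \<eta> + ennreal (\<epsilon> * k + \<epsilon> * k)"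
        proof -
          have "ennreal (\<epsilon> * k) + ennreal (\<epsilon> * k) = ennreal (\<epsilon> * k + \<epsilon> * k)"
            using \<epsilon>0 k0 by (intro ennreal_plus[symmetric]) auto
          then show ?thesis by (simp add: add.assoc)
        qed
        also have "\<dots> \<le> g \<eta> + ennreal e"
        proof -
          have "\<epsilon> * (2 * k + 1) = 2 * (\<epsilon> * k) + \<epsilon>" by (simp add: algebra_simps)
          then have "\<epsilon> * k + \<epsilon> * k \<le> e" using \<epsilon>e \<epsilon>0 by linarith
          then show ?thesis by (intro add_mono ennreal_leI) auto
        qed
        finally show "T \<eta> \<le> g \<eta> + ennreal e" .
      qed
    qed
    have msum: "(\<lambda>\<eta>. ennreal (psum abs (\<nu> \<eta>) P)) \<in> borel_measurable \<sigma>" if "finite P" for P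
    proof -
      have "(\<lambda>\<eta>. ennreal (psum abs (\<nu> \<eta>) P)) = (\<lambda>\<eta>. \<Sum>E\<in>P. ennreal \<bar>blinfun_apply \<eta> (\<mu> E)\<bar>)"
        by (rule ext) (simp add: psum_def \<nu>_def sum_ennreal)
      also have "\<dots> \<in> borel_measurable \<sigma>" by (rule borel_measurable_sum) (rule meas)
      finally show ?thesis .
    qed
    have "(\<integral>\<^sup>+\<eta>. T \<eta> \<partial>\<sigma>) \<le> (\<integral>\<^sup>+\<eta>. g \<eta> \<partial>\<sigma>)"
      by (rule nn_integral_mono) (use main sp in auto)
    also have "(\<integral>\<^sup>+\<eta>. g \<eta> \<partial>\<sigma>) = (SUP n. \<integral>\<^sup>+\<eta>. ennreal (psum abs (\<nu> \<eta>) (Pn n)) \<partial>\<sigma>)"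
      unfolding g_def
    proof (rule nn_integral_monotone_convergence_SUP)
      show "incseq (\<lambda>n \<eta>. ennreal (psum abs (\<nu> \<eta>) (Pn n)))"
        by (rule incseq_SucI) (simp add: le_fun_def Pmono ennreal_leI)
      show "(\<lambda>\<eta>. ennreal (psum abs (\<nu> \<eta>) (Pn n))) \<in> borel_measurable \<sigma>" for n
        using Pnp[of n] by (intro msum) (simp add: parts_def)
    qed
    also have "\<dots> \<le> L" by (rule SUP_least) (simp add: int_eq[OF Pnp] psL[OF Pnp])
    finally show ?thesis .
  qed

  show ?thesis using le1 le2 by (simp add: L_def T_def \<nu>_def)
qed

end
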